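(* Let $q\ge1$, $(a,q)=1$, $X\ge2$ and $1\le h\le X$. Then $$J_{1,a,q}(X,h):=\int_0^h\Big|\sum_{n\le x}F(n)e^{-n/X}\Big|^2dx\ll H_{a,q}(h)+\frac{h}{\varphi^2(q)},$$ where $F(n)=\Lambda(n)\delta(n)-\frac{1}{\varphi(q)}+\frac{\widetilde\chi(a)}{\varphi(q)}n^{\widetilde\beta-1}$ and $H_{a,q}(y)=\int_0^y\Big(\psi(t,q,a)-\frac{t}{\varphi(q)}+\frac{\widetilde\chi(a)}{\varphi(q)}\frac{t^{\widetilde\beta}}{\widetilde\beta}\Big)^2dt$.
   Context: $\Lambda$ is the von Mangoldt function, $\varphi$ Euler's totient, $\delta(n)=1$ if $n\equiv a\pmod q$ and $0$ otherwise, $\psi(t,q,a)=\sum_{m\le t,\ m\equiv a (q)}\Lambda(m)$. $\widetilde\beta$ is the possible Siegel (exceptional) zero for modulus $q$, a real zero of $L(s,\widetilde\chi)$ for the exceptional real character $\widetilde\chi$ mod $q$ (at most one exists; if none, the terms involving $\widetilde\beta$ are absent). *)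

theory Defs
  imports "HOL-Analysis.Analysis" "HOL-Number_Theory.Number_Theory"
begin

definition dirichlet_char :: "nat \<Rightarrow> (nat \<Rightarrow> real) \<Rightarrow> bool" where
  "dirichlet_char q chi \<longleftrightarrow> q \<ge> 1 \<and> chi 1 = 1 \<and>
     (\<forall>m n. chi (m * n) = chi m * chi n) \<and>
     (\<forall>n. chi (n + q) = chi n) \<and>
     (\<forall>n. chi n = 0 \<longleftrightarrow> \<not> coprime n q)"

definition principal_char :: "nat \<Rightarrow> nat \<Rightarrow> real" where
  "principal_char q n = (if coprime n q then 1 else 0)"

text \<open>For a nonprincipal character and real 0 < s < 1 the Dirichlet series converges
  (conditionally) to L(s,chi); a real zero in (0,1) is a point where this limit is 0.\<close>
definition L_real_zero :: "(nat \<Rightarrow> real) \<Rightarrow> real \<Rightarrow> bool" where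
  "L_real_zero chi s \<longleftrightarrow> 0 < s \<and> s < 1 \<and>
     (\<lambda>N. \<Sum>n=1..N. chi n * real n powr (-s)) \<longlonglongrightarrow> 0"

definition siegel_zero :: "real \<Rightarrow> nat \<Rightarrow> (nat \<Rightarrow> real) \<Rightarrow> real \<Rightarrow> bool" where
  "siegel_zero c q chi \<beta> \<longleftrightarrow> dirichlet_char q chi \<and> chi \<noteq> principal_char q \<and>
     L_real_zero chi \<beta> \<and> \<beta> \<ge> 1 - c / ln (real q)"

definition delta_ap :: "nat \<Rightarrow> nat \<Rightarrow> nat \<Rightarrow> real" where
  "delta_ap q a n = (if [n = a] (mod q) then 1 else 0)"

definition psi_ap :: "real \<Rightarrow> nat \<Rightarrow> nat \<Rightarrow> real" where
  "psi_ap t q a = (\<Sum>m\<in>{m. 1 \<le> m \<and> real m \<le> t \<and> [m = a] (mod q)}. mangoldt m)"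

text \<open>e stands for chi~(a) (and e = 0 when there is no exceptional zero), b for beta~.\<close>
definition F_fun :: "nat \<Rightarrow> nat \<Rightarrow> real \<Rightarrow> real \<Rightarrow> nat \<Rightarrow> real" where
  "F_fun q a e b n = mangoldt n * delta_ap q a n - 1 / real (totient q)
     + e / real (totient q) * real n powr (b - 1)"

definition H_fun :: "nat \<Rightarrow> nat \<Rightarrow> real \<Rightarrow> real \<Rightarrow> real \<Rightarrow> real" where
  "H_fun q a e b y = integral {0..y} (\<lambda>t. (psi_ap t q a - t / real (totient q)
     + e / real (totient q) * (t powr b / b))\<^sup>2)"

definition J_fun :: "nat \<Rightarrow> nat \<Rightarrow> real \<Rightarrow> real \<Rightarrow> real \<Rightarrow> real \<Rightarrow> real" where
  "J_fun q a e b X h = integral {0..h} (\<lambda>x.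
     \<bar>\<Sum>n\<in>{n. 1 \<le> n \<and> real n \<le> x}. F_fun q a e b n * exp (- real n / X)\<bar>\<^sup>2)"

end

theory Submission
  imports Defs "HOL-Complex_Analysis.Complex_Analysis"
begin

lemma dc_mod:
  assumes "dirichlet_char q chi" shows "chi (n mod q) = chi n"
proof -
  have per: "chi (m + k * q) = chi m" for m k
  proof (induction k)
    case (Suc k)
    have "chi (m + Suc k * q) = chi ((m + k*q) + q)" by (simp add: algebra_simps)
    also have "\<dots> = chi (m + k*q)" using assms unfolding dirichlet_char_def by blast
    finally show ?case using Suc by simp
  qed simp
  have "n = n mod q + (n div q) * q" by simp
  then have "chi n = chi (n mod q + (n div q) * q)" by simp
  also have "\<dots> = chi (n mod q)" by (rule per)
  finally show ?thesis by simp
qed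

lemma dc_per: assumes "dirichlet_char q chi" shows "chi (k * q + r) = chi r"
  using dc_mod[OF assms, of "k*q+r"] dc_mod[OF assms, of r] by simp

lemma dc_pow: assumes "dirichlet_char q chi" shows "chi (n ^ k) = chi n ^ k"
  using assms unfolding dirichlet_char_def by (induction k) auto

lemma dc_unit:
  assumes "dirichlet_char q chi" "coprime n q" shows "\<bar>chi n\<bar> = 1"
proof -
  have q1: "q \<ge> 1" using assms unfolding dirichlet_char_def by blast
  have "[n ^ totient q = 1] (mod q)" by (rule euler_theorem[OF assms(2)])
  then have "(n ^ totient q) mod q = 1 mod q" by (simp add: cong_def)
  then have "chi (n ^ totient q) = chi 1"
    using dc_mod[OF assms(1), of "n ^ totient q"] dc_mod[OF assms(1), of 1] by simp
  then have "chi n ^ totient q = 1" using dc_pow[OF assms(1)] assms(1)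
    unfolding dirichlet_char_def by simp
  then have "\<bar>chi n\<bar> ^ totient q = 1" by (simp only: power_abs[symmetric])
  moreover have "totient q > 0" using q1 by simp
  ultimately show ?thesis
    using power_eq_imp_eq_base[of "\<bar>chi n\<bar>" "totient q" 1] by simp
qed

lemma dc_bound:
  assumes "dirichlet_char q chi" shows "\<bar>chi n\<bar> \<le> 1"
proof (cases "coprime n q")
  case True then show ?thesis using dc_unit[OF assms] by simp
next
  case False then have "chi n = 0" using assms unfolding dirichlet_char_def by blast
  then show ?thesis by simp
qed

lemma dc_sum_zero:
  assumes dc: "dirichlet_char q chi" and np: "chi \<noteq> principal_char q"
  shows "(\<Sum>r<q. chi r) = 0"
proof -
  obtain n where "chi n \<noteq> principal_char q n" using np by blast
  then have cop: "coprime n q" and ne: "chi n \<noteq> 1"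
    using dc unfolding principal_char_def dirichlet_char_def by (auto split: if_splits)
  let ?m = "n mod q"
  have q1: "q \<ge> 1" using dc unfolding dirichlet_char_def by blast
  have cop2: "coprime ?m q" using cop q1 by (simp add: coprime_mod_left_iff)
  have "bij_betw (\<lambda>r. ?m * r mod q) {1..<q} {1..<q}"
  proof -
    have inj: "inj_on (\<lambda>r. ?m * r mod q) {1..<q}"
    proof (rule inj_onI)
      fix x y assume x: "x \<in> {1..<q}" and y: "y \<in> {1..<q}" and e: "?m * x mod q = ?m * y mod q"
      then have "[?m * x = ?m * y] (mod q)" by (simp add: cong_def)
      then have "[x = y] (mod q)" using cong_mult_lcancel_nat[OF cop2] by simp
      then show "x = y" using x y by (simp add: cong_def)
    qed
    have sub: "(\<lambda>r. ?m * r mod q) ` {1..<q} \<subseteq> {1..<q}"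
    proof
      fix z assume "z \<in> (\<lambda>r. ?m * r mod q) ` {1..<q}"
      then obtain r where r: "r \<in> {1..<q}" "z = ?m * r mod q" by blast
      have "z < q" using r q1 by simp
      moreover have "z \<noteq> 0"
      proof
        assume "z = 0"
        then have "[?m * r = ?m * 0] (mod q)" using r by (simp add: cong_def)
        then have "[r = 0] (mod q)" using cong_mult_lcancel_nat[OF cop2, of r 0] by simp
        then show False using r by (simp add: cong_def)
      qed
      ultimately show "z \<in> {1..<q}" by simp
    qed
    have "(\<lambda>r. ?m * r mod q) ` {1..<q} = {1..<q}"
      using inj sub by (simp add: endo_inj_surj)
    then show ?thesis using inj by (simp add: bij_betw_def)
  qed
  then have "(\<Sum>r\<in>{1..<q}. chi (?m * r mod q)) = (\<Sum>r\<in>{1..<q}. chi r)"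
    by (rule sum.reindex_bij_betw)
  then have e1: "(\<Sum>r\<in>{1..<q}. chi ?m * chi r) = (\<Sum>r\<in>{1..<q}. chi r)"
    using dc unfolding dirichlet_char_def by (simp add: dc_mod[OF dc])
  have split: "(\<Sum>r<q. f r) = f 0 + (\<Sum>r\<in>{1..<q}. f r)" for f :: "nat \<Rightarrow> real"
  proof -
    have "{..<q} = insert 0 {1..<q}" using q1 by auto
    then show ?thesis by simp
  qed
  have "chi ?m * chi 0 = chi 0"
    using dc unfolding dirichlet_char_def by (metis mult_zero_right)
  then have "chi ?m * (\<Sum>r<q. chi r) = (\<Sum>r<q. chi r)"
    using e1 by (simp add: split sum_distrib_left distrib_left)
  moreover have "chi ?m \<noteq> 1" using ne dc_mod[OF dc, of n] by simp
  ultimately show ?thesis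
    by (metis mult_cancel_right1)
qed

lemma dc_sum_zero1:
  assumes dc: "dirichlet_char q chi" and np: "chi \<noteq> principal_char q"
  shows "(\<Sum>r=1..q. chi r) = 0"
proof -
  have q1: "q \<ge> 1" using dc unfolding dirichlet_char_def by blast
  have "chi q = chi 0" using dc_mod[OF dc, of q] by simp
  have A: "{1..q} = insert q {1..<q}" and B: "{..<q} = insert 0 {1..<q}" using q1 by auto
  have "(\<Sum>r=1..q. chi r) = (\<Sum>r<q. chi r)"
    unfolding A B using \<open>chi q = chi 0\<close> by simp
  then show ?thesis using dc_sum_zero[OF dc np] by simp
qed

lemma dc_finite: "finite {chi. dirichlet_char q chi}"
proof -
  let ?R = "\<lambda>chi. restrict chi {..<q}"
  have "inj_on ?R {chi. dirichlet_char q chi}"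
  proof (rule inj_onI)
    fix x y assume x: "x \<in> {chi. dirichlet_char q chi}" and y: "y \<in> {chi. dirichlet_char q chi}"
      and e: "?R x = ?R y"
    show "x = y"
    proof
      fix n
      have q1: "q \<ge> 1" using x unfolding dirichlet_char_def by blast
      have "n mod q < q" using q1 by simp
      then have "x (n mod q) = y (n mod q)" using e by (metis restrict_apply' lessThan_iff)
      then show "x n = y n" using dc_mod[of q x n] dc_mod[of q y n] x y by simp
    qed
  qed
  moreover have "?R ` {chi. dirichlet_char q chi} \<subseteq> PiE {..<q} (\<lambda>_. {-1,0,1})"
  proof
    fix f assume "f \<in> ?R ` {chi. dirichlet_char q chi}"
    then obtain chi where dc: "dirichlet_char q chi" and f: "f = ?R chi" by blast
    have "chi n \<in> {-1,0,1}" for n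
    proof (cases "coprime n q")
      case True then show ?thesis using dc_unit[OF dc True] by (auto simp: abs_if split: if_splits)
    next
      case False then show ?thesis using dc unfolding dirichlet_char_def by blast
    qed
    then show "f \<in> PiE {..<q} (\<lambda>_. {-1,0,1})" using f by auto
  qed
  moreover have "finite (PiE {..<q} (\<lambda>_. {-1::real,0,1}))" by (intro finite_PiE) auto
  ultimately show ?thesis by (meson finite_imageD finite_subset)
qed

lemma powr_deriv_c:
  assumes "y > 0"
  shows "((\<lambda>z. z powr w) has_field_derivative w * (complex_of_real y) powr (w - 1)) (at (complex_of_real y) within S)"
proof -
  have "complex_of_real y \<notin> \<real>\<^sub>\<le>\<^sub>0" using assms by (simp add: complex_nonpos_Reals_iff)
  then show ?thesis by (rule has_field_derivative_at_within[OF has_field_derivative_powr])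
qed

lemma norm_powr_ofreal: "y \<ge> 0 \<Longrightarrow> norm (complex_of_real y powr w) = y powr Re w"
  by (subst norm_powr_real_powr) auto

lemma taylor2:
  fixes x0 t :: real and s :: complex
  assumes x0: "x0 > 0" and t: "t \<ge> 0" and s: "Re s \<ge> -2"
  shows "norm (of_real (x0+t) powr (-s) - of_real x0 powr (-s) - of_real t * ((-s) * of_real x0 powr (-s-1)))
         \<le> t^2 * (norm s * norm (s+1) * x0 powr (-Re s - 2))"
proof -
  define M where "M = norm s * norm (s+1) * x0 powr (-Re s - 2)"
  define S where "S = closed_segment (complex_of_real x0) (complex_of_real (x0+t))"
  have Sr: "\<exists>y. z = complex_of_real y \<and> x0 \<le> y \<and> y \<le> x0 + t" if zS: "z \<in> S" for z
    using that t unfolding S_def closed_segment_of_real by (auto simp: closed_segment_eq_real_ivl)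
  have cS: "convex S" unfolding S_def by simp
  have x0S: "complex_of_real x0 \<in> S" and x1S: "complex_of_real (x0+t) \<in> S" unfolding S_def by auto
  define f where "f = (\<lambda>z::complex. (-s) * z powr (-s-1))"
  define f' where "f' = (\<lambda>z::complex. (-s) * ((-s-1) * z powr (-s-1-1)))"
  have df: "(f has_field_derivative f' z) (at z within S)" if zS: "z \<in> S" for z
  proof -
    obtain y where y: "z = complex_of_real y" "x0 \<le> y" using Sr[OF zS] by blast
    have "y > 0" using y x0 by simp
    show ?thesis unfolding f_def f'_def y(1)
      by (intro DERIV_cmult powr_deriv_c \<open>y > 0\<close>)
  qed
  have bf': "norm (f' z) \<le> M" if zS: "z \<in> S" for z
  proof -
    obtain y where y: "z = complex_of_real y" "x0 \<le> y" using Sr[OF zS] by blast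
    have e: "f' z = (-s) * (-(s+1) * complex_of_real y powr (-s-2))"
      unfolding f'_def y(1) by (simp add: algebra_simps)
    have "norm (f' z) = norm s * norm (s+1) * y powr (-Re s - 2)"
      unfolding e norm_mult norm_minus_cancel using y x0 by (simp add: norm_powr_ofreal)
    also have "\<dots> \<le> M" unfolding M_def
      by (intro mult_left_mono powr_mono2') (use y x0 s in auto)
    finally show ?thesis .
  qed
  have b1: "norm (f z - f (complex_of_real x0)) \<le> M * t" if zS: "z \<in> S" for z
  proof -
    have "norm (f z - f (complex_of_real x0)) \<le> M * norm (z - complex_of_real x0)"
      by (rule field_differentiable_bound[OF cS df bf' that x0S])
    also have "\<dots> \<le> M * t"
    proof -
      obtain y where y: "z = complex_of_real y" "x0 \<le> y" "y \<le> x0 + t" using Sr[OF zS] by blast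
      have "norm (z - complex_of_real x0) = \<bar>y - x0\<bar>" unfolding y(1)
        by (metis norm_of_real of_real_diff)
      also have "\<dots> \<le> t" using y by simp
      finally show ?thesis
        by (intro mult_left_mono) (auto simp: M_def)
    qed
    finally show ?thesis .
  qed
  define g where "g = (\<lambda>z. z powr (-s) - z * f (complex_of_real x0))"
  have dg: "(g has_field_derivative (f z - f (complex_of_real x0))) (at z within S)" if zS: "z \<in> S" for z
  proof -
    obtain y where y: "z = complex_of_real y" "x0 \<le> y" using Sr[OF zS] by blast
    have "y > 0" using y x0 by simp
    have "(g has_field_derivative ((-s) * z powr (-s-1) - 1 * f (complex_of_real x0))) (at z within S)"
      unfolding g_def y(1)
      by (intro DERIV_diff DERIV_cmult_right powr_deriv_c \<open>y > 0\<close> DERIV_ident)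
    then show ?thesis unfolding f_def by simp
  qed
  have "norm (g (complex_of_real (x0+t)) - g (complex_of_real x0)) \<le> (M * t) * norm (complex_of_real (x0+t) - complex_of_real x0)"
    by (rule field_differentiable_bound[OF cS dg b1 x1S x0S])
  also have "norm (complex_of_real (x0+t) - complex_of_real x0) = t" using t
    by (metis abs_of_nonneg add_diff_cancel_left' norm_of_real of_real_diff)
  finally have "norm (g (complex_of_real (x0+t)) - g (complex_of_real x0)) \<le> t^2 * M"
    by (simp add: power2_eq_square algebra_simps)
  moreover have "g (complex_of_real (x0+t)) - g (complex_of_real x0) =
     of_real (x0+t) powr (-s) - of_real x0 powr (-s) - of_real t * ((-s) * of_real x0 powr (-s-1))"
    unfolding g_def f_def by (simp add: algebra_simps)
  ultimately show ?thesis unfolding M_def by simp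
qed

definition A1 :: "nat \<Rightarrow> (nat \<Rightarrow> real) \<Rightarrow> real" where
  "A1 q chi = (\<Sum>r=1..q. real r * chi r)"
definition Lphi :: "nat \<Rightarrow> (nat \<Rightarrow> real) \<Rightarrow> nat \<Rightarrow> complex \<Rightarrow> complex" where
  "Lphi q chi k s = (\<Sum>r=1..q. complex_of_real (chi r) * of_nat (k*q+r) powr (-s))"
definition gt :: "nat \<Rightarrow> (nat \<Rightarrow> real) \<Rightarrow> nat \<Rightarrow> complex \<Rightarrow> complex" where
  "gt q chi k s = Lphi q chi k s + complex_of_real (A1 q chi / real q) *
      (of_nat (k*q) powr (-s) - of_nat (Suc k * q) powr (-s))"

lemma A1_bound: assumes dc: "dirichlet_char q chi" shows "\<bar>A1 q chi\<bar> \<le> real q * real q"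
proof -
  have "\<bar>A1 q chi\<bar> \<le> (\<Sum>r=1..q. \<bar>real r * chi r\<bar>)" unfolding A1_def by (rule sum_abs)
  also have "\<dots> \<le> (\<Sum>r=1..q. real q)"
  proof (rule sum_mono)
    fix r assume r: "r \<in> {1..q}"
    have "\<bar>real r * chi r\<bar> = real r * \<bar>chi r\<bar>" by (simp add: abs_mult)
    also have "\<dots> \<le> real r * 1" using dc_bound[OF dc, of r] by (intro mult_left_mono) auto
    also have "\<dots> \<le> real q" using r by simp
    finally show "\<bar>real r * chi r\<bar> \<le> real q" .
  qed
  also have "\<dots> = real q * real q" by simp
  finally show ?thesis .
qed

lemma gt_bound:
  assumes dc: "dirichlet_char q chi" and np: "chi \<noteq> principal_char q"
    and k: "k \<ge> 1" and s: "Re s \<ge> -2"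
  shows "norm (gt q chi k s) \<le> 2 * real q ^ 3 * (norm s * norm (s+1) * (real (k*q)) powr (-Re s - 2))"
proof -
  have q1: "q \<ge> 1" using dc unfolding dirichlet_char_def by blast
  define x0 where "x0 = real (k*q)"
  have x0: "x0 > 0" using k q1 unfolding x0_def by simp
  define M where "M = norm s * norm (s+1) * x0 powr (-Re s - 2)"
  have M0: "M \<ge> 0" unfolding M_def by simp
  define D1 where "D1 = (-s) * complex_of_real x0 powr (-s-1)"
  define P0 where "P0 = complex_of_real x0 powr (-s)"
  define R where "R = (\<lambda>t. complex_of_real (x0+t) powr (-s) - P0 - complex_of_real t * D1)"
  have hR: "norm (R t) \<le> t^2 * M" if "t \<ge> 0" for t
    unfolding R_def P0_def D1_def M_def by (rule taylor2[OF x0 that s])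
  have e1: "complex_of_nat (k*q + r) powr (-s) = R (real r) + P0 + complex_of_real (real r) * D1" for r
  proof -
    have "complex_of_nat (k*q + r) = complex_of_real (x0 + real r)" unfolding x0_def by simp
    then show ?thesis unfolding R_def by simp
  qed
  have e2: "complex_of_nat (Suc k * q) powr (-s) = R (real q) + P0 + complex_of_real (real q) * D1"
    using e1[of q] by (simp add: algebra_simps)
  have e0: "complex_of_nat (k * q) powr (-s) = P0" unfolding P0_def x0_def by simp
  have sum0: "(\<Sum>r=1..q. complex_of_real (chi r)) = 0"
    using dc_sum_zero1[OF dc np] by (metis of_real_0 of_real_sum)
  have sumA: "(\<Sum>r=1..q. complex_of_real (chi r) * complex_of_real (real r)) = complex_of_real (A1 q chi)"
    unfolding A1_def of_real_sum by (simp add: mult.commute)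
  have "Lphi q chi k s = (\<Sum>r=1..q. complex_of_real (chi r) * R (real r) + P0 * complex_of_real (chi r)
       + D1 * (complex_of_real (chi r) * complex_of_real (real r)))"
    unfolding Lphi_def e1 by (intro sum.cong) (auto simp: algebra_simps)
  also have "\<dots> = (\<Sum>r=1..q. complex_of_real (chi r) * R (real r)) + P0 * (\<Sum>r=1..q. complex_of_real (chi r))
       + D1 * (\<Sum>r=1..q. complex_of_real (chi r) * complex_of_real (real r))"
    by (simp add: sum.distrib sum_distrib_left)
  finally have L: "Lphi q chi k s = (\<Sum>r=1..q. complex_of_real (chi r) * R (real r)) + D1 * complex_of_real (A1 q chi)"
    using sum0 sumA by simp
  have qq: "complex_of_real (A1 q chi / real q) * complex_of_real (real q) = complex_of_real (A1 q chi)"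
    using q1 by (simp flip: of_real_mult)
  have G: "gt q chi k s = (\<Sum>r=1..q. complex_of_real (chi r) * R (real r)) - complex_of_real (A1 q chi / real q) * R (real q)"
    unfolding gt_def L e0 e2 using qq q1 by (simp add: algebra_simps)
  have n1: "norm (\<Sum>r=1..q. complex_of_real (chi r) * R (real r)) \<le> real q * (real q ^ 2 * M)"
  proof -
    have "norm (\<Sum>r=1..q. complex_of_real (chi r) * R (real r)) \<le> (\<Sum>r=1..q. norm (complex_of_real (chi r) * R (real r)))"
      by (rule norm_sum)
    also have "\<dots> \<le> (\<Sum>r=1..q. real q ^ 2 * M)"
    proof (rule sum_mono)
      fix r assume r: "r \<in> {1..q}"
      have "norm (complex_of_real (chi r) * R (real r)) = \<bar>chi r\<bar> * norm (R (real r))"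
        by (simp add: norm_mult)
      also have "\<dots> \<le> 1 * (real r ^ 2 * M)"
        using dc_bound[OF dc, of r] hR[of "real r"] by (intro mult_mono) auto
      also have "\<dots> \<le> real q ^ 2 * M" using r M0 by (auto intro!: mult_right_mono power_mono)
      finally show "norm (complex_of_real (chi r) * R (real r)) \<le> real q ^ 2 * M" .
    qed
    also have "\<dots> = real q * (real q ^ 2 * M)" by simp
    finally show ?thesis .
  qed
  have n2: "norm (complex_of_real (A1 q chi / real q) * R (real q)) \<le> real q * (real q ^ 2 * M)"
  proof -
    have "\<bar>A1 q chi / real q\<bar> \<le> real q" using A1_bound[OF dc] q1
      by (simp add: abs_div divide_le_eq)
    then have "norm (complex_of_real (A1 q chi / real q) * R (real q)) \<le> real q * (real q ^ 2 * M)"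
      unfolding norm_mult norm_of_real using hR[of "real q"] by (intro mult_mono) auto
    then show ?thesis .
  qed
  have "norm (gt q chi k s) \<le> real q * (real q ^ 2 * M) + real q * (real q ^ 2 * M)"
    unfolding G using n1 n2 norm_triangle_ineq4 by (smt (verit))
  then show ?thesis unfolding M_def x0_def by (simp add: power3_eq_cube power2_eq_square algebra_simps)
qed

definition Om :: "complex set" where "Om = {s. -1/2 < Re s} \<inter> ball 0 3"

definition Fc :: "nat \<Rightarrow> (nat \<Rightarrow> real) \<Rightarrow> complex \<Rightarrow> complex" where
  "Fc q chi s = Lphi q chi 0 s - complex_of_real (A1 q chi / real q) * of_nat q powr (-s)
      + (\<Sum>k. gt q chi (Suc k) s)"

lemma Om_open: "open Om" unfolding Om_def
  by (intro open_Int open_halfspace_Re_gt open_ball)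
lemma Om_convex: "convex Om" unfolding Om_def
  by (intro convex_Int convex_halfspace_Re_gt convex_ball)

lemma gt_bound_Om:
  assumes dc: "dirichlet_char q chi" and np: "chi \<noteq> principal_char q" and s: "s \<in> Om"
  shows "norm (gt q chi (Suc k) s) \<le> 24 * real q ^ 3 * real (Suc k) powr (-3/2)"
proof -
  have q1: "q \<ge> 1" using dc unfolding dirichlet_char_def by blast
  have sRe: "Re s > -1/2" and sn: "norm s < 3" using s unfolding Om_def by auto
  have n1: "norm (s+1) \<le> 4" using sn norm_triangle_ineq[of s 1] by simp
  have a: "norm s * norm (s+1) \<le> 12" using sn n1
    using mult_mono[of "norm s" 3 "norm (s+1)" 4] by simp
  have b: "real (Suc k * q) powr (-Re s - 2) \<le> real (Suc k) powr (-3/2)"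
  proof -
    have "real (Suc k * q) powr (-Re s - 2) \<le> real (Suc k * q) powr (-3/2)"
    proof (rule powr_mono)
      show "- Re s - 2 \<le> - 3 / 2" using sRe by (simp add: field_simps)
      have "1 \<le> Suc k * q" using q1 by simp
      then show "1 \<le> real (Suc k * q)" by (metis of_nat_1 of_nat_le_iff)
    qed
    also have "\<dots> \<le> real (Suc k) powr (-3/2)"
    proof (rule powr_mono2')
      have "Suc k * 1 \<le> Suc k * q" using q1 by (intro mult_le_mono2)
      then show "real (Suc k) \<le> real (Suc k * q)" by (metis mult_1_right of_nat_le_iff)
    qed auto
    finally show ?thesis .
  qed
  have "norm (gt q chi (Suc k) s) \<le> 2 * real q ^ 3 * (norm s * norm (s+1) * real (Suc k * q) powr (-Re s - 2))"
    using sRe by (intro gt_bound[OF dc np]) auto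
  also have "\<dots> \<le> 2 * real q ^ 3 * (12 * real (Suc k) powr (-3/2))"
    using a b by (intro mult_left_mono mult_mono) auto
  finally show ?thesis by simp
qed

lemma summable_bound: "summable (\<lambda>k. 24 * real q ^ 3 * real (Suc k) powr (-3/2))"
proof -
  have "summable (\<lambda>k. real k powr (-3/2))" by (subst summable_real_powr_iff) auto
  then have "summable (\<lambda>k. real (Suc k) powr (-3/2))"
    using summable_Suc_iff[of "\<lambda>k. real k powr (-3/2)"] by simp
  then show ?thesis by (intro summable_mult)
qed

lemma Lphi_holo: "(\<lambda>s. Lphi q chi k s) holomorphic_on A"
  unfolding Lphi_def by (intro holomorphic_intros holomorphic_on_powr_right)

lemma gt_holo: "(\<lambda>s. gt q chi k s) holomorphic_on A"
  unfolding gt_def by (intro holomorphic_intros holomorphic_on_powr_right Lphi_holo)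

lemma Fc_unif:
  assumes dc: "dirichlet_char q chi" and np: "chi \<noteq> principal_char q"
  shows "uniform_limit Om (\<lambda>n s. \<Sum>k<n. gt q chi (Suc k) s) (\<lambda>s. \<Sum>k. gt q chi (Suc k) s) sequentially"
  by (rule Weierstrass_m_test[OF gt_bound_Om[OF dc np] summable_bound])

lemma Fc_holo:
  assumes dc: "dirichlet_char q chi" and np: "chi \<noteq> principal_char q"
  shows "Fc q chi holomorphic_on Om"
proof -
  have "(\<lambda>s. \<Sum>k. gt q chi (Suc k) s) holomorphic_on Om"
  proof (rule holomorphic_uniform_sequence[OF Om_open])
    show "(\<lambda>s. \<Sum>k<n. gt q chi (Suc k) s) holomorphic_on Om" for n
      by (intro holomorphic_on_sum gt_holo)
    fix x assume "x \<in> Om"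
    then obtain e where e: "e > 0" "ball x e \<subseteq> Om" using Om_open open_contains_ball by blast
    have "cball x (e/2) \<subseteq> ball x e" using e(1) by (auto simp: subset_eq)
    then have "cball x (e/2) \<subseteq> Om" using e(2) by blast
    then show "\<exists>d>0. cball x d \<subseteq> Om \<and> uniform_limit (cball x d) (\<lambda>n s. \<Sum>k<n. gt q chi (Suc k) s) (\<lambda>s. \<Sum>k. gt q chi (Suc k) s) sequentially"
      using e Fc_unif[OF dc np] by (intro exI[of _ "e/2"]) (auto intro: uniform_limit_on_subset)
  qed
  then show ?thesis unfolding Fc_def
    by (intro holomorphic_intros holomorphic_on_powr_right Lphi_holo)
qed

definition Pc :: "(nat \<Rightarrow> real) \<Rightarrow> nat \<Rightarrow> complex \<Rightarrow> complex" where
  "Pc chi N s = (\<Sum>n=1..N. complex_of_real (chi n) * of_nat n powr (-s))"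

lemma sum_split_block: "(\<Sum>n=1..m+q. f n) = (\<Sum>n=1..m. f n) + (\<Sum>r=1..q. f (m+r))"
  for f :: "nat \<Rightarrow> complex"
  by (induction q) (auto simp: add_Suc_right)

lemma Pc_blocks:
  assumes dc: "dirichlet_char q chi"
  shows "Pc chi (Suc K * q) s = (\<Sum>k\<le>K. Lphi q chi k s)"
proof (induction K)
  case 0
  show ?case unfolding Pc_def Lphi_def by simp
next
  case (Suc K)
  have "Pc chi (Suc (Suc K) * q) s = Pc chi (Suc K * q) s + (\<Sum>r=1..q. complex_of_real (chi (Suc K * q + r)) * of_nat (Suc K * q + r) powr (-s))"
    unfolding Pc_def using sum_split_block[of _ "Suc K * q" q] by (simp add: add.commute)
  also have "(\<Sum>r=1..q. complex_of_real (chi (Suc K * q + r)) * of_nat (Suc K * q + r) powr (-s)) = Lphi q chi (Suc K) s"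
  proof -
    have "chi (Suc K * q + r) = chi r" for r by (rule dc_per[OF dc])
    then show ?thesis unfolding Lphi_def by (simp only:)
  qed
  finally show ?case using Suc by simp
qed

lemma Lphi_tele:
  "(\<Sum>k\<le>K. Lphi q chi k s) = Lphi q chi 0 s + (\<Sum>k<K. gt q chi (Suc k) s)
     - complex_of_real (A1 q chi / real q) * (of_nat q powr (-s) - of_nat (Suc K * q) powr (-s))"
proof (induction K)
  case 0 then show ?case by simp
next
  case (Suc K)
  show ?case unfolding sum.atMost_Suc sum.lessThan_Suc Suc gt_def
    by (simp add: algebra_simps)
qed

lemma tail_zero:
  assumes "q \<ge> 1" "Re s > 0"
  shows "(\<lambda>K. complex_of_nat (Suc K * q) powr (-s)) \<longlonglongrightarrow> 0"
proof -
  have lim: "filterlim (\<lambda>K. real (Suc K * q)) at_top sequentially"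
  proof (rule filterlim_at_top_mono[OF filterlim_real_sequentially])
    show "\<forall>\<^sub>F K in sequentially. real K \<le> real (Suc K * q)"
    proof (intro always_eventually allI)
      fix K :: nat
      have "K * 1 \<le> Suc K * q" using assms(1) by (intro mult_le_mono) auto
      then show "real K \<le> real (Suc K * q)" by (metis mult_1_right of_nat_le_iff)
    qed
  qed
  have "(\<lambda>K. real (Suc K * q) powr (- Re s)) \<longlonglongrightarrow> 0"
    using assms(2) by (intro tendsto_neg_powr lim) auto
  moreover have "norm (complex_of_nat (Suc K * q) powr (-s)) = real (Suc K * q) powr (- Re s)" for K
    using norm_powr_ofreal[of "real (Suc K * q)" "-s"] by simp
  ultimately have "(\<lambda>K. norm (complex_of_nat (Suc K * q) powr (-s))) \<longlonglongrightarrow> 0" by simp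
  then show ?thesis by (simp only: tendsto_norm_zero_iff)
qed

lemma Pc_lim:
  assumes dc: "dirichlet_char q chi" and np: "chi \<noteq> principal_char q"
    and s: "s \<in> Om" "Re s > 0"
  shows "(\<lambda>K. Pc chi (Suc K * q) s) \<longlonglongrightarrow> Fc q chi s"
proof -
  have q1: "q \<ge> 1" using dc unfolding dirichlet_char_def by blast
  have sm: "summable (\<lambda>k. gt q chi (Suc k) s)"
    by (rule summable_comparison_test'[OF summable_bound gt_bound_Om[OF dc np s(1)]])
  have "(\<lambda>K. Lphi q chi 0 s + (\<Sum>k<K. gt q chi (Suc k) s)
     - complex_of_real (A1 q chi / real q) * (of_nat q powr (-s) - of_nat (Suc K * q) powr (-s)))
     \<longlonglongrightarrow> Lphi q chi 0 s + (\<Sum>k. gt q chi (Suc k) s) - complex_of_real (A1 q chi / real q) * (of_nat q powr (-s) - 0)"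
    by (intro tendsto_intros summable_LIMSEQ sm tail_zero q1 s(2))
  then show ?thesis unfolding Pc_blocks[OF dc] Lphi_tele Fc_def by (simp add: algebra_simps)
qed

lemma sum_inv_sq: "(\<Sum>n=2..N+2. 1/(real n)^2) \<le> 3/4 - 1/(real N + 2)"
proof (induction N)
  case 0 then show ?case by (simp add: numeral_2_eq_2)
next
  case (Suc N)
  have "(\<Sum>n=2..Suc N+2. 1/(real n)^2) = (\<Sum>n=2..N+2. 1/(real n)^2) + 1/(real N + 3)^2"
    by (simp add: add_ac)
  also have "\<dots> \<le> 3/4 - 1/(real N + 2) + 1/(real N + 3)^2" using Suc by simp
  also have "\<dots> \<le> 3/4 - 1/(real (Suc N) + 2)"
  proof -
    have a: "1/(real N + 3)^2 \<le> 1/((real N + 2)*(real N + 3))"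
      unfolding power2_eq_square by (intro divide_left_mono mult_right_mono mult_pos_pos) auto
    have b: "1/((real N + 2)*(real N + 3)) = 1/(real N + 2) - 1/(real N + 3)"
      by (simp add: field_simps)
    have "1/(real N + 3)^2 \<le> 1/(real N + 2) - 1/(real N + 3)" using a b by simp
    then show ?thesis by (simp add: add_ac)
  qed
  finally show ?case .
qed

lemma powr_m2: assumes "n \<ge> 1" shows "real n powr (-2) = 1/(real n)^2"
proof -
  have p: "real n > 0" using assms by simp
  have "real n powr (-2) = inverse (real n powr 2)" by (rule powr_minus)
  also have "real n powr 2 = (real n)^2" using p by (intro powr_numeral) simp
  finally show ?thesis by (simp add: divide_inverse)
qed

lemma Pc2_bound:
  assumes dc: "dirichlet_char q chi" and N: "N \<ge> 1"
  shows "norm (Pc chi N 2 - 1) \<le> 3/4"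
proof (cases "N = 1")
  case True
  have "chi 1 = 1" using dc unfolding dirichlet_char_def by blast
  then show ?thesis using True unfolding Pc_def by simp
next
  case False
  have "N = (N - 2) + 2" using N False by simp
  then obtain M where M: "N = M + 2" by blast
  have "chi 1 = 1" using dc unfolding dirichlet_char_def by blast
  have ins: "{1..N} = insert 1 {2..N}" using N by auto
  have "Pc chi N 2 - 1 = (\<Sum>n=2..N. complex_of_real (chi n) * of_nat n powr (-2))"
    unfolding Pc_def ins using \<open>chi 1 = 1\<close> by simp
  also have "norm \<dots> \<le> (\<Sum>n=2..N. norm (complex_of_real (chi n) * of_nat n powr (-2)))"
    by (rule norm_sum)
  also have "\<dots> \<le> (\<Sum>n=2..N. 1/(real n)^2)"
  proof (rule sum_mono)
    fix n assume n: "n \<in> {2..N}"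
    have "norm (complex_of_nat n powr (-2)) = real n powr (-2)"
      using norm_powr_ofreal[of "real n" "-2"] by simp
    also have "\<dots> = 1/(real n)^2" using n by (intro powr_m2) auto
    finally have e: "norm (complex_of_nat n powr (-2)) = 1/(real n)^2" .
    have "norm (complex_of_real (chi n) * of_nat n powr (-2)) = \<bar>chi n\<bar> * (1/(real n)^2)"
      unfolding norm_mult e by simp
    also have "\<dots> \<le> 1 * (1/(real n)^2)" using dc_bound[OF dc, of n] by (intro mult_right_mono) auto
    finally show "norm (complex_of_real (chi n) * of_nat n powr (-2)) \<le> 1/(real n)^2" by simp
  qed
  also have "\<dots> \<le> 3/4 - 1/(real M + 2)" unfolding M by (rule sum_inv_sq)
  also have "\<dots> \<le> 3/4" by simp
  finally show ?thesis .
qed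

lemma Pc_real: "Pc chi N (complex_of_real b) = complex_of_real (\<Sum>n=1..N. chi n * real n powr (-b))"
proof -
  have "complex_of_nat n powr (- complex_of_real b) = complex_of_real (real n powr (-b))" for n
    using powr_of_real[of "real n" "-b"] by simp
  then show ?thesis unfolding Pc_def of_real_sum of_real_mult by simp
qed

lemma zero_free:
  assumes dc: "dirichlet_char q chi" and np: "chi \<noteq> principal_char q"
  shows "\<exists>\<epsilon>>0. \<forall>b. L_real_zero chi b \<longrightarrow> \<epsilon> \<le> b"
proof (rule ccontr)
  assume "\<not> ?thesis"
  then have H: "\<forall>\<epsilon>>0. \<exists>b. L_real_zero chi b \<and> b < \<epsilon>" by (auto simp: not_le)
  have q1: "q \<ge> 1" using dc unfolding dirichlet_char_def by blast
  define U where "U = complex_of_real ` {b. L_real_zero chi b}"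
  have UOm: "U \<subseteq> Om"
  proof
    fix z assume "z \<in> U"
    then obtain b where b: "z = complex_of_real b" "0 < b" "b < 1"
      unfolding U_def L_real_zero_def by blast
    then show "z \<in> Om" unfolding Om_def by auto
  qed
  have zOm: "0 \<in> Om" and twoOm: "2 \<in> Om" unfolding Om_def by auto
  have lim: "0 islimpt U"
  proof (rule islimpt_approachable[THEN iffD2], intro allI impI)
    fix e :: real assume "e > 0"
    then obtain b where b: "L_real_zero chi b" "b < e" using H by blast
    then have "b > 0" unfolding L_real_zero_def by blast
    then show "\<exists>x'\<in>U. x' \<noteq> 0 \<and> dist x' 0 < e"
      using b unfolding U_def by (intro bexI[of _ "complex_of_real b"]) auto
  qed
  have zeros: "Fc q chi z = 0" if "z \<in> U" for z
  proof -
    obtain b where b: "z = complex_of_real b" "L_real_zero chi b" using \<open>z \<in> U\<close> unfolding U_def by blast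
    then have b01: "0 < b" "b < 1" and
      t: "(\<lambda>N. \<Sum>n=1..N. chi n * real n powr (-b)) \<longlonglongrightarrow> 0"
      unfolding L_real_zero_def by auto
    have sm: "strict_mono (\<lambda>K. Suc K * q)" using q1 by (intro strict_monoI) auto
    have "((\<lambda>N. \<Sum>n=1..N. chi n * real n powr (-b)) \<circ> (\<lambda>K. Suc K * q)) \<longlonglongrightarrow> 0"
      by (rule LIMSEQ_subseq_LIMSEQ[OF t sm])
    then have "(\<lambda>K. complex_of_real ((\<lambda>N. \<Sum>n=1..N. chi n * real n powr (-b)) (Suc K * q))) \<longlonglongrightarrow> complex_of_real 0"
      by (intro tendsto_of_real) (simp add: o_def)
    then have t1: "(\<lambda>K. Pc chi (Suc K * q) z) \<longlonglongrightarrow> 0" unfolding b(1) Pc_real by simp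
    have t2: "(\<lambda>K. Pc chi (Suc K * q) z) \<longlonglongrightarrow> Fc q chi z"
      using b01 UOm \<open>z \<in> U\<close> b(1) by (intro Pc_lim[OF dc np]) auto
    show ?thesis using LIMSEQ_unique[OF t2 t1] .
  qed
  have "Fc q chi 2 = 0"
    by (rule analytic_continuation[OF Fc_holo[OF dc np] Om_open convex_connected[OF Om_convex] UOm zOm lim zeros twoOm])
  moreover have "norm (Fc q chi 2 - 1) \<le> 3/4"
  proof (rule LIMSEQ_le_const2)
    show "(\<lambda>K. norm (Pc chi (Suc K * q) 2 - 1)) \<longlonglongrightarrow> norm (Fc q chi 2 - 1)"
      using twoOm by (intro tendsto_intros Pc_lim[OF dc np]) auto
    show "\<exists>N. \<forall>n\<ge>N. norm (Pc chi (Suc n * q) 2 - 1) \<le> 3/4"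
      using q1 by (intro exI[of _ 0] allI impI Pc2_bound[OF dc]) auto
  qed
  ultimately show False by simp
qed

lemma bm_leb: "f \<in> borel_measurable borel \<Longrightarrow> f \<in> borel_measurable (lebesgue_on S)"
  by (intro measurable_restrict_space1 measurable_completion) (simp add: measurable_lborel1)

lemma step_meas: "(\<lambda>x::real. f (nat \<lfloor>x\<rfloor>) :: real) \<in> borel_measurable borel"
proof -
  have "(\<lambda>z::int. f (nat z)) \<in> count_space UNIV \<rightarrow>\<^sub>M borel" by simp
  then show ?thesis by (rule measurable_compose[OF measurable_real_floor])
qed

lemma bounded_integrable:
  fixes f :: "real \<Rightarrow> real"
  assumes "f \<in> borel_measurable borel" "\<And>x. x \<in> {a..b} \<Longrightarrow> \<bar>f x\<bar> \<le> B"
  shows "f integrable_on {a..b}"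
  by (rule measurable_bounded_by_integrable_imp_integrable_real[OF bm_leb[OF assms(1)] integrable_const_ivl assms(2)]) auto

lemma step_bound:
  assumes "x \<le> b"
  shows "\<bar>f (nat \<lfloor>x\<rfloor>)\<bar> \<le> (\<Sum>n\<le>nat \<lfloor>b\<rfloor>. \<bar>f n :: real\<bar>)"
proof -
  have "nat \<lfloor>x\<rfloor> \<le> nat \<lfloor>b\<rfloor>" using assms by (intro nat_mono floor_mono)
  then show ?thesis by (intro member_le_sum) auto
qed

lemma step_integrable: "(\<lambda>x::real. f (nat \<lfloor>x\<rfloor>) :: real) integrable_on {a..b}"
proof -
  have m: "(\<lambda>x::real. f (nat \<lfloor>x\<rfloor>) :: real) \<in> borel_measurable borel" by (rule step_meas)
  have bd: "\<bar>f (nat \<lfloor>x\<rfloor>)\<bar> \<le> (\<Sum>n\<le>nat \<lfloor>b\<rfloor>. \<bar>f n\<bar>)" if "x \<in> {a..b}" for x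
    using that by (intro step_bound) auto
  show ?thesis by (rule bounded_integrable[OF m], rule bd)
qed

lemma step_interval: "integral {real n..real n + 1} (\<lambda>x::real. f (nat \<lfloor>x\<rfloor>) :: real) = f n"
proof -
  have "integral {real n..real n + 1} (\<lambda>x. f (nat \<lfloor>x\<rfloor>)) = integral {real n..real n + 1} (\<lambda>x. f n)"
  proof (rule integral_spike[OF negligible_sing[of "real n + 1"]])
    fix x assume x: "x \<in> {real n..real n + 1} - {real n + 1}"
    then have "\<lfloor>x\<rfloor> = int n" by (intro floor_unique) auto
    then show "f n = f (nat \<lfloor>x\<rfloor>)" by simp
  qed
  then show ?thesis by simp
qed

lemma step_sum:
  assumes "M \<ge> 1"
  shows "integral {1..real M} (\<lambda>x::real. f (nat \<lfloor>x\<rfloor>) :: real) = (\<Sum>n\<in>{1..<M}. f n)"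
  using assms
proof (induction M rule: dec_induct)
  case base then show ?case by simp
next
  case (step M)
  have "integral {1..real (Suc M)} (\<lambda>x. f (nat \<lfloor>x\<rfloor>)) =
        integral {1..real M} (\<lambda>x. f (nat \<lfloor>x\<rfloor>)) + integral {real M..real M + 1} (\<lambda>x. f (nat \<lfloor>x\<rfloor>))"
    using step(1) Henstock_Kurzweil_Integration.integral_combine[where a=1 and c="real M" and b="real M + 1" and f="\<lambda>x. f (nat \<lfloor>x\<rfloor>)", OF _ _ step_integrable]
    by (simp add: add.commute)
  also have "\<dots> = (\<Sum>n\<in>{1..<M}. f n) + f M" using step(3) step_interval by simp
  also have "\<dots> = (\<Sum>n\<in>{1..<Suc M}. f n)" using step(1) by simp
  finally show ?case .
qed

lemma floor_set: "{n::nat. 1 \<le> n \<and> real n \<le> x} = {1..nat \<lfloor>x\<rfloor>}"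
proof -
  have "real n \<le> x \<longleftrightarrow> n \<le> nat \<lfloor>x\<rfloor>" if "n \<ge> 1" for n
  proof -
    have "real n \<le> x \<longleftrightarrow> int n \<le> \<lfloor>x\<rfloor>" by (simp add: le_floor_iff)
    also have "\<dots> \<longleftrightarrow> n \<le> nat \<lfloor>x\<rfloor>" using that by linarith
    finally show ?thesis .
  qed
  then show ?thesis by auto
qed

lemma young_aux:
  fixes z y b :: real
  assumes "z \<ge> 0" "y > 0" "0 < b" "b < 1"
  shows "z powr b * y powr (1-b) \<le> b*z + (1-b)*y"
proof (cases "z = 0")
  case True then show ?thesis using assms by simp
next
  case False
  then show ?thesis using Youngs_inequality_0[of b "1-b" z y] assms by simp
qed

lemma powr_split:
  fixes n b :: real assumes "n > 0"
  shows "n powr (b-1) = 1 / n powr (1-b)" and "n powr b = n / n powr (1-b)"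
proof -
  show "n powr (b-1) = 1 / n powr (1-b)"
    using powr_minus_divide[of n "1-b"] by simp
  have "n powr b * n powr (1-b) = n" using assms by (simp flip: powr_add)
  then show "n powr b = n / n powr (1-b)" using assms by (simp add: field_simps)
qed

lemma term_upper:
  fixes n b :: real
  assumes n: "n \<ge> 1" and b: "0 < b" "b < 1"
  shows "b * n powr (b-1) \<le> n powr b - (n-1) powr b"
proof -
  define P where "P = n powr (1-b)"
  have P: "P > 0" using n unfolding P_def by simp
  have Y: "(n-1) powr b * P \<le> n - b"
    using young_aux[of "n-1" n b] n b unfolding P_def by (simp add: algebra_simps)
  have "b * n powr (b-1) = b / P" using powr_split(1)[of n b] n unfolding P_def by simp
  also have "\<dots> \<le> (n - (n-1) powr b * P) / P" using Y P by (intro divide_right_mono) auto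
  also have "\<dots> = n powr b - (n-1) powr b" using powr_split(2)[of n b] n P unfolding P_def
    by (simp add: field_simps)
  finally show ?thesis .
qed

lemma term_lower:
  fixes n b :: real
  assumes n: "n \<ge> 1" and b: "0 < b" "b < 1"
  shows "(n+1) powr b - n powr b \<le> b * n powr (b-1)"
proof -
  define P where "P = n powr (1-b)"
  have P: "P > 0" using n unfolding P_def by simp
  have Y: "(n+1) powr b * P \<le> n + b"
    using young_aux[of "n+1" n b] n b unfolding P_def by (simp add: algebra_simps)
  have "(n+1) powr b - n powr b = ((n+1) powr b * P - n) / P"
    using powr_split(2)[of n b] n P unfolding P_def by (simp add: field_simps)
  also have "\<dots> \<le> b / P" using Y P by (intro divide_right_mono) auto
  also have "\<dots> = b * n powr (b-1)" using powr_split(1)[of n b] n unfolding P_def by simp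
  finally show ?thesis .
qed

lemma sum_upper:
  assumes b: "0 < b" "b < 1"
  shows "b * (\<Sum>n=1..N. real n powr (b-1)) \<le> real N powr b"
proof (induction N)
  case 0 then show ?case by simp
next
  case (Suc N)
  have "b * (\<Sum>n=1..Suc N. real n powr (b-1)) = b * (\<Sum>n=1..N. real n powr (b-1)) + b * real (Suc N) powr (b-1)"
    by (simp add: algebra_simps)
  also have "\<dots> \<le> real N powr b + (real (Suc N) powr b - (real (Suc N) - 1) powr b)"
    using Suc term_upper[of "real (Suc N)" b] b by (intro add_mono) auto
  also have "\<dots> = real (Suc N) powr b" by simp
  finally show ?case .
qed

lemma sum_lower:
  assumes b: "0 < b" "b < 1"
  shows "real (N+1) powr b - 1 \<le> b * (\<Sum>n=1..N. real n powr (b-1))"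
proof (induction N)
  case 0 then show ?case by simp
next
  case (Suc N)
  have "real (Suc N + 1) powr b - 1 = (real (N+1) powr b - 1) + (real (Suc N) + 1) powr b - real (Suc N) powr b"
    by (simp add: algebra_simps)
  also have "\<dots> \<le> b * (\<Sum>n=1..N. real n powr (b-1)) + b * real (Suc N) powr (b-1)"
    using Suc term_lower[of "real (Suc N)" b] b by simp
  also have "\<dots> = b * (\<Sum>n=1..Suc N. real n powr (b-1))"
    by (simp add: algebra_simps)
  finally show ?case .
qed

lemma D_bound:
  assumes b: "0 < b" "b < 1" and x: "x \<ge> 0"
  shows "\<bar>(\<Sum>n=1..nat \<lfloor>x\<rfloor>. real n powr (b-1)) - x powr b / b\<bar> \<le> 1/b"
proof -
  define N where "N = nat \<lfloor>x\<rfloor>"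
  have N1: "real N \<le> x" and N2: "x \<le> real (N+1)" unfolding N_def using x
    by (auto simp: of_nat_nat) (linarith)
  define S where "S = (\<Sum>n=1..N. real n powr (b-1))"
  have u: "b * S \<le> x powr b"
    using sum_upper[OF b, of N] powr_mono2[of b "real N" x] N1 b unfolding S_def by simp
  have l: "x powr b - 1 \<le> b * S"
    using sum_lower[OF b, of N] powr_mono2[of b x "real (N+1)"] N2 x b unfolding S_def by simp
  have "S - x powr b / b \<le> 0" using u b by (simp add: field_simps)
  moreover have "- (1/b) \<le> S - x powr b / b" using l b by (simp add: field_simps)
  ultimately show ?thesis unfolding S_def N_def by (simp add: abs_le_iff)
qed

lemma abel_sum:
  fixes F w :: "nat \<Rightarrow> real"
  shows "(\<Sum>n=1..N. F n * w n) = (\<Sum>n=1..N. F n) * w N + (\<Sum>n\<in>{1..<N}. (\<Sum>k=1..n. F k) * (w n - w (Suc n)))"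
proof (induction N)
  case 0 then show ?case by simp
next
  case (Suc N)
  show ?case
  proof (cases "N = 0")
    case True then show ?thesis by simp
  next
    case False
    have "{1..<Suc N} = insert N {1..<N}" using False by auto
    then have "(\<Sum>n\<in>{1..<Suc N}. (\<Sum>k=1..n. F k) * (w n - w (Suc n))) =
       (\<Sum>k=1..N. F k) * (w N - w (Suc N)) + (\<Sum>n\<in>{1..<N}. (\<Sum>k=1..n. F k) * (w n - w (Suc n)))"
      by simp
    then show ?thesis using Suc by (simp add: algebra_simps)
  qed
qed

lemma T_bound:
  fixes s d :: "nat \<Rightarrow> real" and A X :: real
  assumes X: "X > 0" and N: "real N \<le> X" and d: "\<And>n. 0 \<le> d n \<and> d n \<le> 1/X"
    and A: "A^2 \<le> (s N)^2"
  shows "(A + (\<Sum>n\<in>{1..<N}. s n * d n))^2 \<le> 2*(s N)^2 + 2/X * (\<Sum>n\<in>{1..<N}. (s n)^2)"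
proof -
  let ?B = "\<Sum>n\<in>{1..<N}. s n * d n"
  have ab: "(A + ?B)^2 \<le> 2*A^2 + 2*?B^2"
  proof -
    have "(A + ?B)^2 + (A - ?B)^2 = 2*A^2 + 2*?B^2" by (simp add: power2_eq_square algebra_simps)
    moreover have "(A - ?B)^2 \<ge> 0" by simp
    ultimately show ?thesis by linarith
  qed
  have "?B^2 \<le> (\<Sum>n\<in>{1..<N}. (s n * d n)^2) * real (card {1..<N})"
    by (rule sum_squared_le_sum_of_squares)
  also have "\<dots> \<le> (\<Sum>n\<in>{1..<N}. (s n)^2 / X^2) * X"
  proof (rule mult_mono)
    show "(\<Sum>n\<in>{1..<N}. (s n * d n)^2) \<le> (\<Sum>n\<in>{1..<N}. (s n)^2 / X^2)"
    proof (rule sum_mono)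
      fix n
      have "(d n)^2 \<le> (1/X)^2" using d[of n] by (intro power_mono) auto
      then have "(s n)^2 * (d n)^2 \<le> (s n)^2 * (1/X)^2" by (intro mult_left_mono) auto
      then show "(s n * d n)^2 \<le> (s n)^2 / X^2" by (simp add: power_mult_distrib power_divide)
    qed
    show "real (card {1..<N}) \<le> X" using N by simp
  qed (auto intro: sum_nonneg)
  also have "\<dots> = (\<Sum>n\<in>{1..<N}. (s n)^2) / X" using X
    by (simp add: sum_divide_distrib[symmetric] power2_eq_square)
  finally have "?B^2 \<le> (\<Sum>n\<in>{1..<N}. (s n)^2) / X" .
  moreover have "2/X * (\<Sum>n\<in>{1..<N}. (s n)^2) = 2 * ((\<Sum>n\<in>{1..<N}. (s n)^2) / X)" by simp
  ultimately show ?thesis using ab A by linarith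
qed

lemma main_ineq:
  fixes q a :: nat and X h e b b0 :: real
  assumes q: "q \<ge> 1" and X: "X \<ge> 2" and h1: "1 \<le> h" and hX: "h \<le> X"
    and e: "\<bar>e\<bar> \<le> 1" and b0: "0 < b0" and eb: "e = 0 \<or> (b0 \<le> b \<and> b < 1)"
  shows "J_fun q a e b X h \<le> 8 * (1 + 1/b0)^2 * (H_fun q a e b h + h / (real (totient q))^2)"
proof -
  define phi where "phi = real (totient q)"
  have phi1: "phi \<ge> 1" unfolding phi_def using q by (simp add: Suc_le_eq)
  define u where "u = 1 / phi"
  have u0: "u > 0" and u1: "u \<le> 1" unfolding u_def using phi1 by auto
  define K where "K = 1 + 1/b0"
  have K1: "K \<ge> 1" unfolding K_def using b0 by simp
  define Fn where "Fn = F_fun q a e b"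
  define s where "s N = (\<Sum>n=1..N. Fn n)" for N
  define w where "w n = exp (- real n / X)" for n
  define T where "T N = (\<Sum>n=1..N. Fn n * w n)" for N
  define ps where "ps N = (\<Sum>m=1..N. mangoldt m * delta_ap q a m)" for N
  define G where "G t = psi_ap t q a - t / phi + e / phi * (t powr b / b)" for t
  have X0: "X > 0" using X by simp

  have J_eq: "J_fun q a e b X h = integral {0..h} (\<lambda>x. (T (nat \<lfloor>x\<rfloor>))^2)"
    unfolding J_fun_def floor_set T_def w_def Fn_def phi_def by simp
  have H_eq: "H_fun q a e b h = integral {0..h} (\<lambda>t. (G t)^2)"
    unfolding H_fun_def G_def phi_def by simp
  have psi_eq: "psi_ap t q a = ps (nat \<lfloor>t\<rfloor>)" for t
  proof -
    have "{m. 1 \<le> m \<and> real m \<le> t \<and> [m = a] (mod q)} = {m \<in> {1..nat \<lfloor>t\<rfloor>}. [m = a] (mod q)}"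
      using floor_set[of t] by blast
    then have "psi_ap t q a = (\<Sum>m\<in>{m \<in> {1..nat \<lfloor>t\<rfloor>}. [m = a] (mod q)}. mangoldt m)"
      unfolding psi_ap_def by simp
    also have "\<dots> = (\<Sum>m=1..nat \<lfloor>t\<rfloor>. if [m = a] (mod q) then mangoldt m else 0)"
      by (rule sum.inter_filter) simp
    also have "\<dots> = ps (nat \<lfloor>t\<rfloor>)" unfolding ps_def delta_ap_def by (intro sum.cong) auto
    finally show ?thesis .
  qed
  have s_eq: "s N = ps N - real N / phi + e / phi * (\<Sum>n=1..N. real n powr (b-1))" for N
    unfolding s_def Fn_def F_fun_def ps_def phi_def
    by (simp add: sum.distrib sum_subtractf sum_distrib_left)
  have E_bound: "\<bar>s (nat \<lfloor>x\<rfloor>) - G x\<bar> \<le> u * K" if x: "x \<ge> 0" for x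
  proof -
    define N where "N = nat \<lfloor>x\<rfloor>"
    define D where "D = (\<Sum>n=1..N. real n powr (b-1)) - x powr b / b"
    have N1: "real N \<le> x" and N2: "x < real N + 1" unfolding N_def using x
      by (auto simp: of_nat_nat)
    have eq: "s N - G x = (x - real N) * u + e * u * D"
      unfolding s_eq G_def psi_eq N_def[symmetric] D_def u_def by (simp add: algebra_simps)
    have t1: "\<bar>(x - real N) * u\<bar> \<le> u" using N1 N2 u0 by (simp add: abs_mult)
    have t2: "\<bar>e * u * D\<bar> \<le> u * (1/b0)"
    proof (cases "e = 0")
      case True then show ?thesis using u0 b0 by simp
    next
      case False
      then have bb: "b0 \<le> b" "b < 1" using eb by auto
      have "\<bar>D\<bar> \<le> 1/b" unfolding D_def N_def using D_bound[of b x] bb b0 x by simp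
      also have "\<dots> \<le> 1/b0" using bb b0 by (simp add: frac_le)
      finally have "\<bar>D\<bar> \<le> 1/b0" .
      then have "\<bar>e\<bar> * \<bar>D\<bar> \<le> 1 * (1/b0)" using e by (intro mult_mono) auto
      then have "u * (\<bar>e\<bar> * \<bar>D\<bar>) \<le> u * (1/b0)" using u0 by (intro mult_left_mono) auto
      moreover have "\<bar>e * u * D\<bar> = u * (\<bar>e\<bar> * \<bar>D\<bar>)" using u0 by (simp add: abs_mult)
      ultimately show ?thesis by simp
    qed
    have "\<bar>s N - G x\<bar> \<le> u + u * (1/b0)" unfolding eq using t1 t2 by (smt (verit))
    then show ?thesis unfolding K_def N_def by (simp add: algebra_simps)
  qed
  have w01: "0 \<le> w n \<and> w n \<le> 1" for n unfolding w_def using X0 by auto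
  have d01: "0 \<le> w n - w (Suc n) \<and> w n - w (Suc n) \<le> 1/X" for n
  proof -
    have ws: "w (Suc n) = w n * exp (- 1 / X)" unfolding w_def
      by (simp add: exp_add[symmetric] add_divide_distrib diff_divide_distrib)
    have c1: "exp (- 1/X) \<le> 1" using X0 by simp
    have c2: "1 - 1/X \<le> exp (- 1/X)" using exp_ge_add_one_self[of "-1/X"] by simp
    have eq: "w n - w (Suc n) = w n * (1 - exp (- 1/X))" unfolding ws by (simp add: algebra_simps)
    have "0 \<le> w n * (1 - exp (- 1/X))" using w01[of n] c1 by simp
    moreover have "w n * (1 - exp (- 1/X)) \<le> 1 * (1/X)"
      using w01[of n] c1 c2 by (intro mult_mono) auto
    ultimately show ?thesis unfolding eq by simp
  qed
  define Mh where "Mh = nat \<lfloor>h\<rfloor>"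
  have Mh1: "Mh \<ge> 1" unfolding Mh_def using h1 by linarith
  have Mhh: "real Mh \<le> h" unfolding Mh_def using h1 by (simp add: of_nat_nat)
  define Q where "Q = (\<Sum>n\<in>{1..<Mh}. (s n)^2)"
  have Q0: "Q \<ge> 0" unfolding Q_def by (intro sum_nonneg) auto
  have Tb: "(T (nat \<lfloor>x\<rfloor>))^2 \<le> 2 * (s (nat \<lfloor>x\<rfloor>))^2 + 2/X * Q" if x: "x \<in> {0..h}" for x
  proof -
    define N where "N = nat \<lfloor>x\<rfloor>"
    have NX: "real N \<le> X" unfolding N_def using x hX by (auto simp: of_nat_nat) linarith
    have NM: "N \<le> Mh" unfolding N_def Mh_def using x by (intro nat_mono floor_mono) auto
    have ab: "T N = s N * w N + (\<Sum>n\<in>{1..<N}. s n * (w n - w (Suc n)))"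
      unfolding T_def s_def by (rule abel_sum)
    have A: "(s N * w N)^2 \<le> (s N)^2"
    proof -
      have "(w N)^2 \<le> 1" using w01[of N] by (simp add: power_le_one)
      then have "(s N)^2 * (w N)^2 \<le> (s N)^2 * 1" by (intro mult_left_mono) auto
      then show ?thesis by (simp add: power_mult_distrib)
    qed
    have "(T N)^2 \<le> 2*(s N)^2 + 2/X * (\<Sum>n\<in>{1..<N}. (s n)^2)"
      unfolding ab by (rule T_bound[where d="\<lambda>n. w n - w (Suc n)" and s=s, OF X0 NX d01 A])
    also have "(\<Sum>n\<in>{1..<N}. (s n)^2) \<le> Q"
      unfolding Q_def using NM by (intro sum_mono2) auto
    then have "2/X * (\<Sum>n\<in>{1..<N}. (s n)^2) \<le> 2/X * Q" using X0 by (intro mult_left_mono) auto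
    finally show ?thesis unfolding N_def by simp
  qed
  define IS where "IS = integral {0..h} (\<lambda>x. (s (nat \<lfloor>x\<rfloor>))^2)"
  have iT: "(\<lambda>x::real. (T (nat \<lfloor>x\<rfloor>))^2) integrable_on {0..h}"
    by (rule step_integrable[of "\<lambda>N. (T N)^2"])
  have iS: "(\<lambda>x::real. (s (nat \<lfloor>x\<rfloor>))^2) integrable_on {a'..b'}" for a' b'
    by (rule step_integrable[of "\<lambda>N. (s N)^2"])
  have iS2: "(\<lambda>x::real. 2 * (s (nat \<lfloor>x\<rfloor>))^2 + 2/X * Q) integrable_on {0..h}"
    by (rule step_integrable[of "\<lambda>N. 2 * (s N)^2 + 2/X * Q"])
  have "J_fun q a e b X h \<le> integral {0..h} (\<lambda>x. 2 * (s (nat \<lfloor>x\<rfloor>))^2 + 2/X * Q)"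
    unfolding J_eq by (rule integral_le[OF iT iS2 Tb])
  also have "\<dots> = 2 * IS + 2/X * Q * h"
  proof -
    have "integral {0..h} (\<lambda>x. 2 * (s (nat \<lfloor>x\<rfloor>))^2 + 2/X * Q) =
          integral {0..h} (\<lambda>x. 2 * (s (nat \<lfloor>x\<rfloor>))^2) + integral {0..h} (\<lambda>x. 2/X * Q)"
      by (intro integral_add integrable_on_mult_right iS integrable_const_ivl)
    also have "\<dots> = 2 * IS + 2/X * Q * h" unfolding IS_def integral_mult_right
      using h1 by simp
    finally show ?thesis .
  qed
  also have "\<dots> \<le> 2 * IS + 2 * Q"
  proof -
    have "2/X * Q * h = 2 * Q * (h / X)" by simp
    also have "\<dots> \<le> 2 * Q * 1" using Q0 hX X0 by (intro mult_left_mono) auto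
    finally show ?thesis by simp
  qed
  also have "\<dots> \<le> 4 * IS"
  proof -
    have "Q = integral {1..real Mh} (\<lambda>x. (s (nat \<lfloor>x\<rfloor>))^2)"
      unfolding Q_def by (rule step_sum[OF Mh1, symmetric])
    also have "\<dots> \<le> IS"
    proof -
      have nn: "0 \<le> integral {a'..b'} (\<lambda>x::real. (s (nat \<lfloor>x\<rfloor>))^2)" for a' b'
        by (intro integral_nonneg iS) auto
      have c1: "integral {0..1} (\<lambda>x::real. (s (nat \<lfloor>x\<rfloor>))^2) + integral {1..h} (\<lambda>x::real. (s (nat \<lfloor>x\<rfloor>))^2) = IS"
        unfolding IS_def using h1 by (intro Henstock_Kurzweil_Integration.integral_combine iS) auto
      have c2: "integral {1..real Mh} (\<lambda>x::real. (s (nat \<lfloor>x\<rfloor>))^2) + integral {real Mh..h} (\<lambda>x::real. (s (nat \<lfloor>x\<rfloor>))^2)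
          = integral {1..h} (\<lambda>x::real. (s (nat \<lfloor>x\<rfloor>))^2)"
        using Mh1 Mhh by (intro Henstock_Kurzweil_Integration.integral_combine iS) auto
      show ?thesis using c1 c2 nn[of 0 1] nn[of "real Mh" h] by linarith
    qed
    finally have "Q \<le> IS" .
    then show ?thesis by simp
  qed
  also have "\<dots> \<le> 4 * (2 * H_fun q a e b h + 2 * (u*K)^2 * h)"
  proof -
    define B1 where "B1 = (\<Sum>n\<le>nat \<lfloor>h\<rfloor>. \<bar>s n\<bar>)"
    have m1: "(\<lambda>t::real. ps (nat \<lfloor>t\<rfloor>)) \<in> borel_measurable borel" by (rule step_meas)
    have mG: "(\<lambda>t. (G t)^2) \<in> borel_measurable borel"
      unfolding G_def psi_eq using m1 by measurable
    have bG: "\<bar>(G t)^2\<bar> \<le> (B1 + u*K)^2" if t: "t \<in> {0..h}" for t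
    proof -
      have "\<bar>G t\<bar> \<le> \<bar>s (nat \<lfloor>t\<rfloor>)\<bar> + \<bar>s (nat \<lfloor>t\<rfloor>) - G t\<bar>" by linarith
      also have "\<dots> \<le> B1 + u*K" unfolding B1_def using t
        by (intro add_mono step_bound E_bound) auto
      finally have "\<bar>G t\<bar> \<le> B1 + u*K" .
      then have "\<bar>G t\<bar>^2 \<le> (B1 + u*K)^2" by (intro power_mono) auto
      then show ?thesis by simp
    qed
    have iG: "(\<lambda>t. (G t)^2) integrable_on {0..h}"
      by (rule bounded_integrable[OF mG bG])
    have iG2: "(\<lambda>t. 2 * (G t)^2 + 2 * (u*K)^2) integrable_on {0..h}"
      by (intro integrable_add integrable_on_mult_right iG integrable_const_ivl)
    have pw: "(s (nat \<lfloor>x\<rfloor>))^2 \<le> 2 * (G x)^2 + 2 * (u*K)^2" if x: "x \<in> {0..h}" for x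
    proof -
      have eb2: "\<bar>s (nat \<lfloor>x\<rfloor>) - G x\<bar> \<le> u*K" using x by (intro E_bound) auto
      then have "(s (nat \<lfloor>x\<rfloor>) - G x)^2 \<le> (u*K)^2"
        using abs_le_square_iff[of "s (nat \<lfloor>x\<rfloor>) - G x" "u*K"] u0 K1 by simp
      moreover have "(s (nat \<lfloor>x\<rfloor>))^2 + (s (nat \<lfloor>x\<rfloor>) - 2 * G x)^2 = 2 * (G x)^2 + 2 * (s (nat \<lfloor>x\<rfloor>) - G x)^2"
        by (simp add: power2_eq_square algebra_simps)
      moreover have "(s (nat \<lfloor>x\<rfloor>) - 2 * G x)^2 \<ge> 0" by simp
      ultimately show ?thesis by linarith
    qed
    have "IS \<le> integral {0..h} (\<lambda>t. 2 * (G t)^2 + 2 * (u*K)^2)"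
      unfolding IS_def by (rule integral_le[OF iS iG2 pw])
    also have "\<dots> = 2 * H_fun q a e b h + 2 * (u*K)^2 * h"
    proof -
      have "integral {0..h} (\<lambda>t. 2 * (G t)^2 + 2 * (u*K)^2) = integral {0..h} (\<lambda>t. 2 * (G t)^2) + integral {0..h} (\<lambda>t. 2 * (u*K)^2)"
        by (intro integral_add integrable_on_mult_right iG integrable_const_ivl)
      then show ?thesis unfolding H_eq integral_mult_right using h1 by simp
    qed
    finally show ?thesis by simp
  qed
  also have "\<dots> \<le> 8 * (1 + 1/b0)^2 * (H_fun q a e b h + h / (real (totient q))^2)"
  proof -
    have H0: "H_fun q a e b h \<ge> 0"
    proof -
      let ?f = "\<lambda>t. (psi_ap t q a - t / real (totient q) + e / real (totient q) * (t powr b / b))\<^sup>2"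
      have "0 \<le> integral {0..h} ?f"
      proof (cases "?f integrable_on {0..h}")
        case True then show ?thesis by (rule integral_nonneg) auto
      next
        case False then show ?thesis by (simp add: not_integrable_integral)
      qed
      then show ?thesis unfolding H_fun_def .
    qed
    have "8 * H_fun q a e b h \<le> 8 * K^2 * H_fun q a e b h"
      using H0 K1 by (simp add: mult_le_cancel_right1 one_le_power)
    moreover have "h / (real (totient q))^2 = u^2 * h" unfolding u_def phi_def by (simp add: power_divide)
    ultimately show ?thesis unfolding K_def[symmetric] by (simp add: algebra_simps power_mult_distrib)
  qed
  finally show ?thesis .
qed

lemma finite_min_delta:
  assumes "finite A" and "\<forall>x\<in>A. \<exists>\<delta>>0. P x \<delta>"
    and mono: "\<And>x \<delta> \<delta>'. P x \<delta> \<Longrightarrow> 0 < \<delta>' \<Longrightarrow> \<delta>' \<le> \<delta> \<Longrightarrow> P x \<delta>'"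
  shows "\<exists>\<delta>>0. \<forall>x\<in>A. P x (\<delta>::real)"
  using assms(1,2)
proof (induction A rule: finite_induct)
  case empty then show ?case by (intro exI[of _ 1]) auto
next
  case (insert x F)
  then obtain d1 where d1: "d1 > 0" "\<forall>y\<in>F. P y d1" by auto
  obtain d2 where d2: "d2 > 0" "P x d2" using insert(4) by auto
  show ?case
  proof (intro exI[of _ "min d1 d2"] conjI ballI)
    show "min d1 d2 > 0" using d1 d2 by simp
    fix y assume "y \<in> insert x F"
    then show "P y (min d1 d2)"
    proof
      assume "y = x" then show ?thesis using mono[OF d2(2)] d1 d2 by simp
    next
      assume "y \<in> F" then show ?thesis using mono[OF d1(2)[rule_format, OF \<open>y \<in> F\<close>]] d1 d2 by simp
    qed
  qed
qed

lemma zero_free_q: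
  "\<exists>\<delta>>0. \<forall>chi. dirichlet_char q chi \<and> chi \<noteq> principal_char q \<longrightarrow> (\<forall>b. L_real_zero chi b \<longrightarrow> \<delta> \<le> b)"
proof -
  have fin: "finite {chi. dirichlet_char q chi \<and> chi \<noteq> principal_char q}"
    by (rule finite_subset[OF _ dc_finite[of q]]) auto
  have "\<exists>\<delta>>0. \<forall>chi\<in>{chi. dirichlet_char q chi \<and> chi \<noteq> principal_char q}. (\<forall>b. L_real_zero chi b \<longrightarrow> \<delta> \<le> b)"
    by (rule finite_min_delta[OF fin]) (use zero_free in auto)
  then show ?thesis by auto
qed

lemma siegel_lower:
  assumes c: "c > 0"
  shows "\<exists>b0>0. \<forall>q chi b. siegel_zero c q chi b \<longrightarrow> b0 \<le> b \<and> b < 1"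
proof -
  define A where "A = {q::nat. ln (real q) < 2*c}"
  have "A \<subseteq> {..nat \<lceil>exp (2*c)\<rceil>}"
  proof
    fix q assume "q \<in> A"
    then have l: "ln (real q) < 2*c" unfolding A_def by simp
    have "real q \<le> exp (2*c)"
    proof (cases "q = 0")
      case True then show ?thesis by simp
    next
      case False
      then have "real q = exp (ln (real q))" by simp
      also have "\<dots> \<le> exp (2*c)" using l by simp
      finally show ?thesis .
    qed
    then have "real q \<le> real (nat \<lceil>exp (2*c)\<rceil>)" by linarith
    then show "q \<in> {..nat \<lceil>exp (2*c)\<rceil>}" by simp
  qed
  then have fin: "finite A" by (rule finite_subset) simp
  obtain d1 where d1: "d1 > 0" and
    H: "\<forall>q\<in>A. \<forall>chi. dirichlet_char q chi \<and> chi \<noteq> principal_char q \<longrightarrow> (\<forall>b. L_real_zero chi b \<longrightarrow> d1 \<le> b)"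
    using finite_min_delta[OF fin, of "\<lambda>q \<delta>. \<forall>chi. dirichlet_char q chi \<and> chi \<noteq> principal_char q \<longrightarrow> (\<forall>b. L_real_zero chi b \<longrightarrow> \<delta> \<le> b)"]
      zero_free_q by force
  show ?thesis
  proof (intro exI[of _ "min d1 (1/2)"] conjI allI impI)
    show "min d1 (1/2) > 0" using d1 by simp
    fix q chi b assume sz: "siegel_zero c q chi b"
    then have dc: "dirichlet_char q chi" and np: "chi \<noteq> principal_char q" and lz: "L_real_zero chi b"
      and bb: "b \<ge> 1 - c / ln (real q)" unfolding siegel_zero_def by auto
    show "b < 1" using lz unfolding L_real_zero_def by simp
    show "min d1 (1/2) \<le> b"
    proof (cases "q \<in> A")
      case True then show ?thesis using H dc np lz by force
    next
      case False
      then have l: "ln (real q) \<ge> 2*c" unfolding A_def by simp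
      then have "c / ln (real q) \<le> 1/2" using c by (simp add: divide_le_eq)
      then show ?thesis using bb by simp
    qed
  qed
qed

theorem lemma4p2:
  assumes "c > 0"
  shows "\<exists>C>0. \<forall>(q::nat) (a::nat) (X::real) (h::real) (e::real) (b::real).
     q \<ge> 1 \<longrightarrow> coprime a q \<longrightarrow> X \<ge> 2 \<longrightarrow> 1 \<le> h \<longrightarrow> h \<le> X \<longrightarrow>
     ((\<exists>chi. siegel_zero c q chi b \<and> e = chi a) \<or>
      ((\<nexists>chi \<beta>. siegel_zero c q chi \<beta>) \<and> e = 0)) \<longrightarrow>
     J_fun q a e b X h \<le> C * (H_fun q a e b h + h / (real (totient q))\<^sup>2)"
proof -
  obtain b0 where b0: "b0 > 0" and sl: "\<forall>q chi b. siegel_zero c q chi b \<longrightarrow> b0 \<le> b \<and> b < 1"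
    using siegel_lower[OF assms] by blast
  show ?thesis
  proof (intro exI[of _ "8 * (1 + 1/b0)^2"] conjI allI impI)
    have "1 + 1/b0 > 0" using b0 by (simp add: add_pos_pos)
    then show "8 * (1 + 1/b0)^2 > 0" by simp
    fix q a :: nat and X h e b :: real
    assume q: "q \<ge> 1" and cop: "coprime a q" and X: "X \<ge> 2" and h1: "1 \<le> h" and hX: "h \<le> X"
      and disj: "(\<exists>chi. siegel_zero c q chi b \<and> e = chi a) \<or> ((\<nexists>chi \<beta>. siegel_zero c q chi \<beta>) \<and> e = 0)"
    have eb: "\<bar>e\<bar> \<le> 1 \<and> (e = 0 \<or> (b0 \<le> b \<and> b < 1))"
      using disj
    proof
      assume "\<exists>chi. siegel_zero c q chi b \<and> e = chi a"
      then obtain chi where sz: "siegel_zero c q chi b" and ea: "e = chi a" by blast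
      have "dirichlet_char q chi" using sz unfolding siegel_zero_def by blast
      then have "\<bar>e\<bar> \<le> 1" using dc_bound ea by blast
      then show ?thesis using sl sz by blast
    next
      assume "(\<nexists>chi \<beta>. siegel_zero c q chi \<beta>) \<and> e = 0"
      then show ?thesis by simp
    qed
    show "J_fun q a e b X h \<le> 8 * (1 + 1/b0)^2 * (H_fun q a e b h + h / (real (totient q))\<^sup>2)"
      by (rule main_ineq[OF q X h1 hX _ b0]) (use eb in auto)
  qed
qed

end
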